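(* Let $\alpha\ne0$, let $\mathbf L$ be a solution of the difference operator formalism of the cmKP hierarchy with gauge parameter $\alpha$, and let $\varphi(s,t)$ be a function for which there is a difference operator $\hat{\mathbf W}=e^{-\alpha\varphi(s,t)}+\sum_{j\ge1}w_j(s,t)e^{-j\partial_s}$ with $\mathbf L=\hat{\mathbf W}e^{\partial_s}\hat{\mathbf W}^{-1}$ and $\partial_{t_n}\hat{\mathbf W}=\mathbf B^c_n\hat{\mathbf W}$ ($n\ge1$). Then for any $\beta$ (including $\beta=0$), the difference operator $\tilde{\mathbf L}:=e^{(\alpha-\beta)\varphi(s,t)}\mathbf L\,e^{-(\alpha-\beta)\varphi(s,t)}$ satisfies $\partial_{t_n}\tilde{\mathbf L}=[\tilde{\mathbf B}_n,\tilde{\mathbf L}]$ with $\tilde{\mathbf B}_n:=(\tilde{\mathbf L}^n)_{\ge0}-\beta(\tilde{\mathbf L}^n)_0$, i.e. it is a solution with gauge parameter $\beta$.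
   Context: Let $s\in\mathbb Z$ and $t=(t_1,t_2,\dots)$ continuous. $e^{k\partial_s}$ denotes the shift $(e^{k\partial_s}f)(s)=f(s+k)$. Difference operators are formal sums $A=\sum_ja_j(s,t)e^{j\partial_s}$; $A_{\ge0}=\sum_{j\ge0}a_je^{j\partial_s}$, $A_0=a_0$, $A_{<0}=\sum_{j<0}a_je^{j\partial_s}$. Let $\mathbf L=\sum_{j\ge0}b_j(s,t)e^{(1-j)\partial_s}$ with $b_0$ nowhere zero. For a parameter $\alpha$, the difference operator formalism of the cmKP hierarchy with gauge parameter $\alpha$ is $\partial\mathbf L/\partial t_n=[\mathbf B_n,\mathbf L]$, $n\ge1$, where $\mathbf B_n:=(\mathbf L^n)_{\ge0}-\alpha(\mathbf L^n)_0$; $\mathbf B^c_n:=\mathbf B_n-\mathbf L^n=-(\mathbf L^n)_{<0}-\alpha(\mathbf L^n)_0$. *)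

theory Defs
  imports "HOL-Analysis.Analysis"
begin

text \<open>A difference operator A = sum_j a_j(s,t) e^{j d_s} is represented by its coefficient
  function: A j s t = a_j(s,t), with s an integer and t = (t_1, t_2, ...) a real sequence
  (t n is the time t_n; only n >= 1 is used).\<close>

type_synonym dop = "int \<Rightarrow> int \<Rightarrow> (nat \<Rightarrow> real) \<Rightarrow> complex"

definition dop_bounded :: "dop \<Rightarrow> bool" where
  "dop_bounded A \<longleftrightarrow> (\<exists>N. \<forall>j>N. \<forall>s t. A j s t = 0)"

text \<open>Product: (a_i e^{i d})(b_k e^{k d}) = a_i(s) b_k(s+i) e^{(i+k) d}. For operators whose
  shift degrees are bounded above, the sum below ranges over a finite set.\<close>
definition dmul :: "dop \<Rightarrow> dop \<Rightarrow> dop" where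
  "dmul A B = (\<lambda>m s t. \<Sum>i | A i s t \<noteq> 0 \<and> B (m - i) (s + i) t \<noteq> 0.
                          A i s t * B (m - i) (s + i) t)"

definition dadd :: "dop \<Rightarrow> dop \<Rightarrow> dop" where
  "dadd A B = (\<lambda>j s t. A j s t + B j s t)"

definition dsub :: "dop \<Rightarrow> dop \<Rightarrow> dop" where
  "dsub A B = (\<lambda>j s t. A j s t - B j s t)"

definition dcomm :: "dop \<Rightarrow> dop \<Rightarrow> dop" where
  "dcomm A B = dsub (dmul A B) (dmul B A)"

definition dunit :: dop where
  "dunit = (\<lambda>j s t. if j = 0 then 1 else 0)"

definition dshift :: dop where
  "dshift = (\<lambda>j s t. if j = 1 then 1 else 0)"

definition dfun :: "(int \<Rightarrow> (nat \<Rightarrow> real) \<Rightarrow> complex) \<Rightarrow> dop" where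
  "dfun f = (\<lambda>j s t. if j = 0 then f s t else 0)"

primrec dpow :: "dop \<Rightarrow> nat \<Rightarrow> dop" where
  "dpow A 0 = dunit"
| "dpow A (Suc n) = dmul (dpow A n) A"

definition dplus :: "dop \<Rightarrow> dop" where
  "dplus A = (\<lambda>j s t. if j \<ge> 0 then A j s t else 0)"

definition dzero :: "dop \<Rightarrow> dop" where
  "dzero A = (\<lambda>j s t. if j = 0 then A j s t else 0)"

definition dminus :: "dop \<Rightarrow> dop" where
  "dminus A = (\<lambda>j s t. if j < 0 then A j s t else 0)"

definition dscale :: "complex \<Rightarrow> dop \<Rightarrow> dop" where
  "dscale c A = (\<lambda>j s t. c * A j s t)"

definition Bop :: "complex \<Rightarrow> dop \<Rightarrow> nat \<Rightarrow> dop" where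
  "Bop \<alpha> L n = dsub (dplus (dpow L n)) (dscale \<alpha> (dzero (dpow L n)))"

definition Bcop :: "complex \<Rightarrow> dop \<Rightarrow> nat \<Rightarrow> dop" where
  "Bcop \<alpha> L n = dsub (dscale (-1) (dminus (dpow L n))) (dscale \<alpha> (dzero (dpow L n)))"

definition has_tderiv :: "dop \<Rightarrow> nat \<Rightarrow> dop \<Rightarrow> bool" where
  "has_tderiv A n D \<longleftrightarrow>
     (\<forall>j s t. ((\<lambda>x. A j s (t(n := x))) has_vector_derivative D j s t) (at (t n)))"

definition lax_form :: "dop \<Rightarrow> bool" where
  "lax_form L \<longleftrightarrow> (\<forall>j>1. \<forall>s t. L j s t = 0) \<and> (\<forall>s t. L 1 s t \<noteq> 0)"

definition cmKP_sol :: "complex \<Rightarrow> dop \<Rightarrow> bool" where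
  "cmKP_sol \<alpha> L \<longleftrightarrow> lax_form L \<and> (\<forall>n\<ge>1. has_tderiv L n (dcomm (Bop \<alpha> L n) L))"

end

theory Submission
  imports Defs
begin

definition ub :: "dop \<Rightarrow> int \<Rightarrow> bool" where
  "ub A a \<longleftrightarrow> (\<forall>j>a. \<forall>s t. A j s t = 0)"

definition cj :: "(int \<Rightarrow> (nat \<Rightarrow> real) \<Rightarrow> complex) \<Rightarrow> (int \<Rightarrow> (nat \<Rightarrow> real) \<Rightarrow> complex) \<Rightarrow> dop \<Rightarrow> dop" where
  "cj f g A = (\<lambda>j s t. f s t * A j s t * g (s + j) t)"

lemma dmul_eq_sum:
  assumes "finite F" "\<And>i. i \<notin> F \<Longrightarrow> A i s t * B (m - i) (s + i) t = 0"
  shows "dmul A B m s t = (\<Sum>i\<in>F. A i s t * B (m - i) (s + i) t)"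
proof -
  have S: "{i. A i s t \<noteq> 0 \<and> B (m - i) (s + i) t \<noteq> 0} \<subseteq> F"
    using assms(2) by force
  show ?thesis unfolding dmul_def
    by (rule sum.mono_neutral_left[OF assms(1) S]) auto
qed

lemma dmul_ub_sum:
  assumes "ub A a" "ub B b"
  shows "dmul A B m s t = (\<Sum>i\<in>{m-b..a}. A i s t * B (m - i) (s + i) t)"
  by (rule dmul_eq_sum) (use assms in \<open>auto simp: ub_def\<close>)

lemma dmul_ub: assumes "ub A a" "ub B b" shows "ub (dmul A B) (a + b)"
  unfolding ub_def
proof (intro allI impI)
  fix j s t assume "j > a + b"
  then show "dmul A B j s t = 0" using dmul_ub_sum[OF assms, of j s t] by simp
qed

lemma dmul_dfun_left: "dmul (dfun h) A j s t = h s t * A j s t"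
  by (subst dmul_eq_sum[where F="{0}"]) (auto simp: dfun_def)

lemma dmul_dfun_right: "dmul A (dfun h) j s t = A j s t * h (s + j) t"
  by (subst dmul_eq_sum[where F="{j}"]) (auto simp: dfun_def)

lemma dmul_dadd_left:
  assumes "ub A a" "ub B a" "ub C c"
  shows "dmul (dadd A B) C j s t = dmul A C j s t + dmul B C j s t"
proof -
  have "ub (dadd A B) a" using assms by (auto simp: ub_def dadd_def)
  then show ?thesis using assms
    by (simp add: dmul_ub_sum dadd_def distrib_right sum.distrib)
qed

lemma dmul_dadd_right:
  assumes "ub A a" "ub B b" "ub C b"
  shows "dmul A (dadd B C) j s t = dmul A B j s t + dmul A C j s t"
proof -
  have "ub (dadd B C) b" using assms by (auto simp: ub_def dadd_def)
  then show ?thesis using assms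
    by (simp add: dmul_ub_sum dadd_def distrib_left sum.distrib)
qed

lemma dmul_cj:
  assumes nz: "\<And>s t. f s t \<noteq> 0" and inv: "\<And>s t. g s t * f s t = 1"
  shows "dmul (cj f g A) (cj f g B) = cj f g (dmul A B)"
proof (intro ext)
  fix m s t
  have gnz: "g s t \<noteq> 0" for s t using inv[of s t] by auto
  have set: "{i. cj f g A i s t \<noteq> 0 \<and> cj f g B (m - i) (s + i) t \<noteq> 0}
      = {i. A i s t \<noteq> 0 \<and> B (m - i) (s + i) t \<noteq> 0}"
    using nz gnz by (auto simp: cj_def)
  have trm: "cj f g A i s t * cj f g B (m - i) (s + i) t = f s t * (A i s t * B (m - i) (s + i) t) * g (s + m) t" for i
  proof -
    have "cj f g A i s t * cj f g B (m - i) (s + i) t =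
       f s t * A i s t * (g (s + i) t * f (s + i) t) * B (m - i) (s + i) t * g (s + m) t"
      by (simp add: cj_def algebra_simps)
    then show ?thesis using inv[of "s+i" t] by simp
  qed
  show "dmul (cj f g A) (cj f g B) m s t = cj f g (dmul A B) m s t"
    unfolding dmul_def set trm
    by (simp add: cj_def sum_distrib_left sum_distrib_right mult.assoc)
qed

lemma dpow_cj:
  assumes nz: "\<And>s t. f s t \<noteq> 0" and inv: "\<And>s t. g s t * f s t = 1"
  shows "dpow (cj f g A) n = cj f g (dpow A n)"
proof (induction n)
  case 0
  show ?case using inv by (auto simp: cj_def dunit_def fun_eq_iff mult.commute)
next
  case (Suc n)
  then show ?case by (simp add: dmul_cj[OF assms])
qed


lemma ub_cj: "ub A a \<Longrightarrow> ub (cj f g A) a"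
  by (auto simp: ub_def cj_def)

lemma ub_dpow: "ub L 1 \<Longrightarrow> ub (dpow L n) (int n)"
proof (induction n)
  case 0 then show ?case by (auto simp: ub_def dunit_def)
next
  case (Suc n)
  then have "ub (dmul (dpow L n) L) (int n + 1)" by (intro dmul_ub) auto
  then show ?case by (simp add: add.commute)
qed

lemma hvd_eq: "(F has_vector_derivative a) net \<Longrightarrow> a = b \<Longrightarrow> (F has_vector_derivative b) net"
  by simp

lemma exp_chain:
  fixes p :: "(nat \<Rightarrow> real) \<Rightarrow> complex"
  assumes "((\<lambda>x. p (t(n := x))) has_vector_derivative d) (at (t n))"
  shows "((\<lambda>x. exp (k * p (t(n := x)))) has_vector_derivative (k * d * exp (k * p t))) (at (t n))"
proof -
  have "((\<lambda>x. k * p (t(n := x))) has_vector_derivative (k * d)) (at (t n))"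
    using assms by (rule has_vector_derivative_mult_right)
  moreover have "(exp has_field_derivative exp (k * p (t(n := t n)))) (at (k * p (t(n := t n))))"
    by (rule DERIV_exp)
  ultimately have "((exp \<circ> (\<lambda>x. k * p (t(n := x)))) has_vector_derivative (k * d * exp (k * p (t(n := t n))))) (at (t n))"
    by (rule field_vector_diff_chain_at)
  then
  show ?thesis by (simp add: o_def)
qed

theorem mainTheorem20:
  fixes \<alpha> \<beta> :: complex and L W :: dop and \<phi> :: "int \<Rightarrow> (nat \<Rightarrow> real) \<Rightarrow> complex"
  assumes "\<alpha> \<noteq> 0"
    and "cmKP_sol \<alpha> L"
    and "\<forall>n\<ge>1. \<forall>s t. (\<lambda>x. \<phi> s (t(n := x))) differentiable (at (t n))"
    and "\<forall>s t. W 0 s t = exp (- \<alpha> * \<phi> s t)"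
    and "\<forall>j>0. \<forall>s t. W j s t = 0"
    and "\<exists>V. dop_bounded V \<and> dmul W V = dunit \<and> dmul V W = dunit
              \<and> L = dmul (dmul W dshift) V"
    and "\<forall>n\<ge>1. has_tderiv W n (dmul (Bcop \<alpha> L n) W)"
  shows "cmKP_sol \<beta>
           (dmul (dmul (dfun (\<lambda>s t. exp ((\<alpha> - \<beta>) * \<phi> s t))) L)
                 (dfun (\<lambda>s t. exp (- (\<alpha> - \<beta>) * \<phi> s t))))"
proof -
  define c where "c = \<alpha> - \<beta>"
  define f where "f = (\<lambda>s t. exp (c * \<phi> s t))"
  define g where "g = (\<lambda>s t. exp (- c * \<phi> s t))"
  have fnz: "\<And>s t. f s t \<noteq> 0" by (simp add: f_def)
  have gf: "\<And>s t. g s t * f s t = 1" by (simp add: f_def g_def flip: exp_add)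
  define Lt where "Lt = cj f g L"
  have Lt_eq: "dmul (dmul (dfun (\<lambda>s t. exp ((\<alpha> - \<beta>) * \<phi> s t))) L)
                 (dfun (\<lambda>s t. exp (- (\<alpha> - \<beta>) * \<phi> s t))) = Lt"
    by (simp add: fun_eq_iff dmul_dfun_left dmul_dfun_right Lt_def cj_def f_def g_def c_def)
  have lax: "lax_form L" and Lder: "\<And>n. n \<ge> 1 \<Longrightarrow> has_tderiv L n (dcomm (Bop \<alpha> L n) L)"
    using assms(2) by (auto simp: cmKP_sol_def)
  have ubL: "ub L 1" using lax by (auto simp: lax_form_def ub_def)
  have ubLt: "ub Lt 1" unfolding Lt_def by (rule ub_cj[OF ubL])
  have phider: "((\<lambda>x. \<phi> s (t(n := x))) has_vector_derivative dpow L n 0 s t) (at (t n))"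
    if n: "n \<ge> 1" for n s t
  proof -
    obtain d where d: "((\<lambda>x. \<phi> s (t(n := x))) has_vector_derivative d) (at (t n))"
      using assms(3) n vector_derivative_works by blast
    have e1: "((\<lambda>x. exp (- \<alpha> * \<phi> s (t(n := x)))) has_vector_derivative (- \<alpha> * d * exp (- \<alpha> * \<phi> s t))) (at (t n))"
      by (rule exp_chain[OF d])
    have "((\<lambda>x. W 0 s (t(n := x))) has_vector_derivative dmul (Bcop \<alpha> L n) W 0 s t) (at (t n))"
      using assms(7) n by (auto simp: has_tderiv_def)
    moreover have "dmul (Bcop \<alpha> L n) W 0 s t = - \<alpha> * dpow L n 0 s t * exp (- \<alpha> * \<phi> s t)"
      by (subst dmul_eq_sum[where F="{0}"])
         (use assms(4,5) in \<open>auto simp: Bcop_def dsub_def dscale_def dminus_def dzero_def\<close>)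
    ultimately have e2: "((\<lambda>x. exp (- \<alpha> * \<phi> s (t(n := x)))) has_vector_derivative (- \<alpha> * dpow L n 0 s t * exp (- \<alpha> * \<phi> s t))) (at (t n))"
      using assms(4) by simp
    have "- \<alpha> * d * exp (- \<alpha> * \<phi> s t) = - \<alpha> * dpow L n 0 s t * exp (- \<alpha> * \<phi> s t)"
      using vector_derivative_unique_at[OF e1 e2] .
    then have "d = dpow L n 0 s t" using assms(1) by simp
    then show ?thesis using d by simp
  qed
  have "has_tderiv Lt n (dcomm (Bop \<beta> Lt n) Lt)" if n: "n \<ge> 1" for n
    unfolding has_tderiv_def
  proof (intro allI)
    fix j s t
    define P where "P = dpow L n"
    define XA where "XA = Bop \<alpha> L n"
    define Y where "Y = cj f g XA"
    define H where "H = dfun (\<lambda>s t. c * P 0 s t)"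
    have ubP: "ub P (int n)" unfolding P_def by (rule ub_dpow[OF ubL])
    have ubXA: "ub XA (int n)" using ubP
      by (auto simp: ub_def XA_def Bop_def dsub_def dplus_def dscale_def dzero_def P_def)
    have ubY: "ub Y (int n)" unfolding Y_def by (rule ub_cj[OF ubXA])
    have ubH: "ub H (int n)" by (auto simp: ub_def H_def dfun_def)
    have Pt: "dpow Lt n = cj f g P" unfolding Lt_def P_def by (rule dpow_cj[OF fnz gf])
    have gf': "\<And>s t. f s t * P 0 s t * g s t = P 0 s t" using gf
      by (metis mult.commute mult.left_commute mult_1_right)
    have fgz: "\<And>s t z. f s t * (g s t * z) = z" using gf
      by (metis mult.assoc mult.commute mult_1_left)
    have Bb: "Bop \<beta> Lt n = dadd Y H"
      unfolding Bop_def Pt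
      by (auto simp: fun_eq_iff dsub_def dplus_def dscale_def dzero_def dadd_def Y_def H_def
          XA_def Bop_def cj_def dfun_def gf' fgz c_def P_def[symmetric] algebra_simps)
    have ubLtn: "ub Lt (int n)" using ubLt n by (auto simp: ub_def)
    have val: "dcomm (Bop \<beta> Lt n) Lt j s t =
        f s t * dcomm XA L j s t * g (s + j) t + c * P 0 s t * Lt j s t - Lt j s t * (c * P 0 (s + j) t)"
    proof -
      have "dcomm (Bop \<beta> Lt n) Lt j s t = dmul Y Lt j s t + dmul H Lt j s t - (dmul Lt Y j s t + dmul Lt H j s t)"
        unfolding Bb dcomm_def dsub_def
        by (simp add: dmul_dadd_left[OF ubY ubH ubLt] dmul_dadd_right[OF ubLtn ubY ubH])
      also have "dmul Y Lt = cj f g (dmul XA L)" unfolding Y_def Lt_def by (rule dmul_cj[OF fnz gf])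
      also have "dmul Lt Y = cj f g (dmul L XA)" unfolding Y_def Lt_def by (rule dmul_cj[OF fnz gf])
      finally show ?thesis
        by (simp add: H_def dmul_dfun_left dmul_dfun_right cj_def dcomm_def dsub_def algebra_simps)
    qed
    have hL: "((\<lambda>x. L j s (t(n := x))) has_vector_derivative dcomm XA L j s t) (at (t n))"
      using Lder[OF n] by (simp add: has_tderiv_def XA_def)
    have hF: "((\<lambda>x. f s (t(n := x))) has_vector_derivative (c * P 0 s t * f s t)) (at (t n))"
      unfolding f_def P_def by (rule exp_chain[OF phider[OF n]])
    have hG: "((\<lambda>x. g (s + j) (t(n := x))) has_vector_derivative (- c * P 0 (s + j) t * g (s + j) t)) (at (t n))"
      unfolding g_def P_def by (rule exp_chain[OF phider[OF n]])
    have prod: "((\<lambda>x. f s (t(n := x)) * L j s (t(n := x)) * g (s + j) (t(n := x))) has_vector_derivative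
       ((f s t * L j s t) * (- c * P 0 (s + j) t * g (s + j) t) +
        (f s t * dcomm XA L j s t + c * P 0 s t * f s t * L j s t) * g (s + j) t)) (at (t n))"
      using has_vector_derivative_mult[OF has_vector_derivative_mult[OF hF hL] hG] by simp
    show "((\<lambda>x. Lt j s (t(n := x))) has_vector_derivative dcomm (Bop \<beta> Lt n) Lt j s t) (at (t n))"
      unfolding val
      by (rule hvd_eq[OF prod[folded Lt_def[unfolded cj_def, THEN fun_cong, THEN fun_cong, THEN fun_cong]]])
         (simp add: Lt_def cj_def algebra_simps)
  qed
  moreover have "lax_form Lt" using lax fnz gf
    by (auto simp: lax_form_def Lt_def cj_def) (metis mult_zero_left zero_neq_one)
  ultimately show ?thesis unfolding Lt_eq cmKP_sol_def by auto
qed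

end
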